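(* Let $L>0$, $\theta>0$, and for each $t$ let $\widehat\varphi_t$ be convex with $C\subset\operatorname{dom}\partial\widehat\varphi_t$ and $\partial\widehat\varphi_t$ $L$-Lipschitz on $C$ (i.e. $\|g-h\|\le L\|x-y\|$ for $g\in\partial\widehat\varphi_t(x)$, $h\in\partial\widehat\varphi_t(y)$, $x,y\in C$). At each round $t$, let expert points $\boldsymbol x_t=(x_t(0),\dots,x_t(n))\in C^{n+1}$ be given, and let $w_t,\widetilde w_t$ be generated by ONES (with $\widetilde w_1$ having positive entries) using $$\ell_t(i)=\langle g_t,x_t(i)\rangle,\ g_t\in\partial\varphi_t(\overline x_t),\ \overline x_t=\textstyle\sum_i w_t(i)x_t(i);\qquad \widehat\ell_t(i)=\langle \widehat g_t,x_t(i)\rangle,\ \widehat g_t\in\partial\widehat\varphi_t(\widetilde{\overline x}_t),\ \widetilde{\overline x}_t=\textstyle\sum_i\widetilde w_t(i)x_t(i).$$ Then for all $T\ge1$ and $w\in\triangle^n$, $$\sum_{t=1}^T\langle\ell_t,w_t-w\rangle\le\frac1\theta\sum_iw(i)\ln\frac{w(i)}{\widetilde w_1(i)}+\theta\rho^2\sum_{t=1}^T\Big(\sup_{x\in C,\,g\in\partial\varphi_t(x),\,\widehat g\in\partial\widehat\varphi_t(x)}\|g-\widehat g\|^2+\mathbf 1\{\theta>\tfrac{1}{\sqrt2\rho^2L}\}\rho^2L^2\|w_t-\widetilde w_t\|_1^2\Big).$$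
   Context: $H$ is a real Hilbert space, $C\subset H$ nonempty closed convex with diameter $\rho=\sup_{x,y\in C}\|x-y\|<\infty$, and (as used by the paper) $\|x\|\le\rho$ for all $x\in C$. Losses $\varphi_t$ are convex with $C\subset\operatorname{dom}\partial\varphi_t$. ONES: $\widetilde w_{t+1}=\mathscr N(\widetilde w_t\circ e^{-\theta\ell_t})$, $w_{t}=\mathscr N(\widetilde w_{t}\circ e^{-\theta\widehat\ell_{t}})$, where $\triangle^n=\{w\in\mathbb R^{n+1}_+:\|w\|_1=1\}$, $\circ$ is the Hadamard product, $\mathscr N(u)=u/\|u\|_1$; $\mathbf 1\{\cdot\}$ is the zero-one indicator. *)

theory Defs
  imports "HOL-Analysis.Analysis"
begin

definition convex_fun :: "('a::real_vector \<Rightarrow> ereal) \<Rightarrow> bool" where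
  "convex_fun f \<longleftrightarrow> convex {(x, r::real). f x \<le> ereal r}"

definition subdiff :: "('a::real_inner \<Rightarrow> ereal) \<Rightarrow> 'a \<Rightarrow> 'a set" where
  "subdiff f x = {g. f x \<noteq> \<infinity> \<and> f x \<noteq> -\<infinity> \<and>
                     (\<forall>y. f x + ereal (inner g (y - x)) \<le> f y)}"

definition prob_simplex :: "nat \<Rightarrow> (nat \<Rightarrow> real) set" where
  "prob_simplex n = {w. (\<forall>i\<le>n. 0 \<le> w i) \<and> (\<Sum>i\<le>n. w i) = 1}"

end

theory Submission
  imports Defs
begin


lemma kfun_deriv:
  assumes "x > 0"
  shows "((\<lambda>x. ln x - 3*(x-1)*(x+5)/(2*(x+2)^2)) has_real_derivative (1/x - 27/(x+2)^3)) (at x)"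
proof -
  have "((\<lambda>x. ln x - 3*(x-1)*(x+5)/(2*(x+2)^2)) has_real_derivative
     (1/x - ((3*(x+5) + 3*(x-1)) * (2*(x+2)^2) - 3*(x-1)*(x+5)*(2*(2*(x+2)))) / (2*(x+2)^2)^2)) (at x)"
    using assms by (auto intro!: derivative_eq_intros simp: power2_eq_square)
  moreover have "(1/x - ((3*(x+5) + 3*(x-1)) * (2*(x+2)^2) - 3*(x-1)*(x+5)*(2*(2*(x+2)))) / (2*(x+2)^2)^2)
     = 1/x - 27/(x+2)^3"
  proof -
    have "x+2 \<noteq> 0" using assms by simp
    thus ?thesis using assms apply (simp add: field_simps) by algebra
  qed
  ultimately show ?thesis by (simp only:)
qed

lemma kfun_sign:
  fixes x :: real
  assumes "x > 0"
  shows "(x \<ge> 1 \<longrightarrow> ln x - 3*(x-1)*(x+5)/(2*(x+2)^2) \<ge> 0) \<and>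
         (x \<le> 1 \<longrightarrow> ln x - 3*(x-1)*(x+5)/(2*(x+2)^2) \<le> 0)"
proof -
  let ?k = "\<lambda>x::real. ln x - 3*(x-1)*(x+5)/(2*(x+2)^2)"
  have d: "\<exists>y. DERIV ?k z :> y \<and> y \<ge> 0" if "z > 0" for z
  proof -
    have "27 * z \<le> (z+2)^3"
    proof -
      have "(z+2)^3 - 27*z = (z-1)^2*(z+8)" by (simp add: algebra_simps power2_eq_square power3_eq_cube)
      moreover have "(z-1)^2*(z+8) \<ge> 0" using that by simp
      ultimately show ?thesis by linarith
    qed
    hence "27/(z+2)^3 \<le> 1/z" using that by (simp add: field_simps)
    thus ?thesis using kfun_deriv[OF that] by auto
  qed
  have k1: "?k 1 = 0" by simp
  show ?thesis
  proof safe
    assume "x \<ge> 1"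
    have "?k 1 \<le> ?k x" by (rule DERIV_nonneg_imp_nondecreasing[OF \<open>x\<ge>1\<close>]) (use d in auto)
    thus "?k x \<ge> 0" using k1 by simp
  next
    assume "x \<le> 1"
    have "?k x \<le> ?k 1" by (rule DERIV_nonneg_imp_nondecreasing[OF \<open>x\<le>1\<close>]) (use d assms in auto)
    thus "?k x \<le> 0" using k1 by simp
  qed
qed

lemma ffun_nonneg:
  fixes x :: real
  assumes "x > 0"
  shows "3*(x-1)^2/(2*(x+2)) \<le> x * ln x - x + 1"
proof -
  let ?f = "\<lambda>x::real. x * ln x - x + 1 - 3*(x-1)^2/(2*(x+2))"
  let ?k = "\<lambda>x::real. ln x - 3*(x-1)*(x+5)/(2*(x+2)^2)"
  have der: "DERIV ?f z :> ?k z" if "z > 0" for z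
  proof -
    have "DERIV ?f z :> (ln z + z * (1/z) - 1 - (6*(z-1)*(2*(z+2)) - 3*(z-1)^2*2)/(2*(z+2))^2)"
      using that by (auto intro!: derivative_eq_intros simp: power2_eq_square)
    moreover have "(ln z + z * (1/z) - 1 - (6*(z-1)*(2*(z+2)) - 3*(z-1)^2*2)/(2*(z+2))^2) = ?k z"
    proof -
      have "z+2 \<noteq> 0" using that by simp
      thus ?thesis using that apply (simp add: field_simps) by algebra
    qed
    ultimately show ?thesis by (simp only:)
  qed
  have f1: "?f 1 = 0" by simp
  show ?thesis
  proof (cases "x \<ge> 1")
    case True
    have "?f 1 \<le> ?f x" 
    proof (rule DERIV_nonneg_imp_nondecreasing[OF True])
      fix z :: real assume "1 \<le> z" "z \<le> x"
      hence "z > 0" by simp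
      thus "\<exists>y. DERIV ?f z :> y \<and> y \<ge> 0" using der[of z] kfun_sign[of z] \<open>1\<le>z\<close> by blast
    qed
    thus ?thesis using f1 by simp
  next
    case False
    have "?f 1 \<le> ?f x" 
    proof (rule DERIV_nonpos_imp_nonincreasing[of x 1])
      show "x \<le> 1" using False by simp
      fix z :: real assume "x \<le> z" "z \<le> 1"
      hence "z > 0" using assms by simp
      thus "\<exists>y. DERIV ?f z :> y \<and> y \<le> 0" using der[of z] kfun_sign[of z] \<open>z\<le>1\<close> by blast
    qed
    thus ?thesis using f1 by simp
  qed
qed



lemma pointwise_pinsker:
  fixes p q :: real
  assumes "0 \<le> p" "0 < q"
  shows "3*(p-q)^2/(2*(p+2*q)) \<le> p * ln (p/q) - p + q"
proof (cases "p = 0")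
  case True
  thus ?thesis using assms by (simp add: power2_eq_square field_simps)
next
  case False
  hence pp: "p > 0" using assms by simp
  let ?x = "p/q"
  have x: "?x > 0" using pp assms by simp
  have h: "3*(?x-1)^2/(2*(?x+2)) \<le> ?x * ln ?x - ?x + 1" by (rule ffun_nonneg[OF x])
  have "q * (3*(?x-1)^2/(2*(?x+2))) \<le> q * (?x * ln ?x - ?x + 1)"
    using h assms by (intro mult_left_mono) auto
  moreover have "q * (3*(?x-1)^2/(2*(?x+2))) = 3*(p-q)^2/(2*(p+2*q))"
  proof -
    have e1: "?x - 1 = (p-q)/q" "?x + 2 = (p+2*q)/q" using assms by (auto simp: field_simps)
    have "p + 2*q > 0" using assms by simp
    thus ?thesis unfolding e1 using assms by (simp add: power_divide power2_eq_square)
  qed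
  moreover have "q * (?x * ln ?x - ?x + 1) = p * ln (p/q) - p + q"
    using assms by (simp add: field_simps)
  ultimately show ?thesis by simp
qed

lemma weighted_cs:
  fixes a b :: "nat \<Rightarrow> real"
  assumes "\<And>i. i \<in> I \<Longrightarrow> b i > 0"
  shows "(\<Sum>i\<in>I. \<bar>a i\<bar>)^2 \<le> (\<Sum>i\<in>I. (a i)^2 / b i) * (\<Sum>i\<in>I. b i)"
proof -
  have "(\<Sum>i\<in>I. (\<bar>a i\<bar> / sqrt (b i)) * sqrt (b i))^2
     \<le> (\<Sum>i\<in>I. (\<bar>a i\<bar> / sqrt (b i))^2) * (\<Sum>i\<in>I. (sqrt (b i))^2)"
    by (rule Cauchy_Schwarz_ineq_sum)
  moreover have "(\<Sum>i\<in>I. (\<bar>a i\<bar> / sqrt (b i)) * sqrt (b i)) = (\<Sum>i\<in>I. \<bar>a i\<bar>)"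
    by (rule sum.cong) (use assms in \<open>auto simp: less_imp_le[OF assms] dest: assms\<close>)
  moreover have "(\<Sum>i\<in>I. (\<bar>a i\<bar> / sqrt (b i))^2) = (\<Sum>i\<in>I. (a i)^2 / b i)"
  proof (rule sum.cong)
    fix i assume "i \<in> I" then have "b i > 0" using assms[of i] by simp
    then show "(\<bar>a i\<bar> / sqrt (b i))^2 = (a i)^2 / b i" by (simp add: power_divide)
  qed simp
  moreover have "(\<Sum>i\<in>I. (sqrt (b i))^2) = (\<Sum>i\<in>I. b i)"
  proof (rule sum.cong)
    fix i assume "i \<in> I" then have "b i \<ge> 0" using assms[of i] by simp
    then show "(sqrt (b i))^2 = b i" by simp
  qed simp
  ultimately show ?thesis by simp
qed

definition KL :: "nat \<Rightarrow> (nat \<Rightarrow> real) \<Rightarrow> (nat \<Rightarrow> real) \<Rightarrow> real" where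
  "KL n p q = (\<Sum>i\<le>n. p i * ln (p i / q i))"

lemma pinsker:
  assumes p: "\<forall>i\<le>n. 0 \<le> p i" "(\<Sum>i\<le>n. p i) = 1"
    and q: "\<forall>i\<le>n. 0 < q i" "(\<Sum>i\<le>n. q i) = 1"
  shows "(\<Sum>i\<le>n. \<bar>p i - q i\<bar>)^2 / 2 \<le> KL n p q"
proof -
  have pos: "\<And>i. i \<in> {..n} \<Longrightarrow> p i + 2 * q i > 0" using p q
    by (metis add_nonneg_pos atMost_iff mult_pos_pos zero_less_numeral)
  have "(\<Sum>i\<le>n. \<bar>p i - q i\<bar>)^2 \<le> (\<Sum>i\<le>n. (p i - q i)^2 / (p i + 2 * q i)) * (\<Sum>i\<le>n. p i + 2 * q i)"
    by (rule weighted_cs) (use pos in auto)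
  also have "(\<Sum>i\<le>n. p i + 2 * q i) = 3" using p q by (simp add: sum.distrib sum_distrib_left[symmetric])
  finally have cs: "(\<Sum>i\<le>n. \<bar>p i - q i\<bar>)^2 / 2 \<le> (3/2) * (\<Sum>i\<le>n. (p i - q i)^2 / (p i + 2 * q i))"
    by simp
  also have "\<dots> = (\<Sum>i\<le>n. 3*(p i - q i)^2 / (2*(p i + 2 * q i)))"
    by (simp add: sum_distrib_left)
  also have "\<dots> \<le> (\<Sum>i\<le>n. p i * ln (p i / q i) - p i + q i)"
    by (rule sum_mono) (use p q pointwise_pinsker in auto)
  also have "\<dots> = KL n p q" using p q by (simp add: KL_def sum.distrib sum_subtractf)
  finally show ?thesis .
qed

lemma KL_nonneg:
  assumes p: "\<forall>i\<le>n. 0 \<le> p i" "(\<Sum>i\<le>n. p i) = 1"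
    and q: "\<forall>i\<le>n. 0 < q i" "(\<Sum>i\<le>n. q i) = 1"
  shows "0 \<le> KL n p q"
  using pinsker[OF assms] by (smt (verit) divide_nonneg_pos zero_le_power2)



lemma round_bound:
  fixes q c ch u w q' :: "nat \<Rightarrow> real" and \<theta> M :: real
  assumes q: "\<forall>i\<le>n. 0 < q i" "(\<Sum>i\<le>n. q i) = 1"
    and u: "\<forall>i\<le>n. 0 \<le> u i" "(\<Sum>i\<le>n. u i) = 1"
    and th: "\<theta> > 0"
    and M: "\<forall>i\<le>n. \<bar>c i - ch i\<bar> \<le> M"
    and w: "\<forall>i\<le>n. w i = q i * exp (- \<theta> * ch i) / (\<Sum>j\<le>n. q j * exp (- \<theta> * ch j))"
    and q': "\<forall>i\<le>n. q' i = q i * exp (- \<theta> * c i) / (\<Sum>j\<le>n. q j * exp (- \<theta> * c j))"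
  shows "\<theta> * (\<Sum>i\<le>n. c i * (w i - u i))
     \<le> KL n u q - KL n u q' + \<theta>^2 * M^2 / 2 - (\<Sum>i\<le>n. \<bar>w i - q i\<bar>)^2 / 2"
proof -
  define Z where "Z = (\<Sum>j\<le>n. q j * exp (- \<theta> * ch j))"
  define Z' where "Z' = (\<Sum>j\<le>n. q j * exp (- \<theta> * c j))"
  have Zp: "Z > 0" unfolding Z_def using q by (intro sum_pos) auto
  have Z'p: "Z' > 0" unfolding Z'_def using q by (intro sum_pos) auto
  have wp: "\<forall>i\<le>n. 0 < w i" using w q Zp unfolding Z_def by auto
  have q'p: "\<forall>i\<le>n. 0 < q' i" using q' q Z'p unfolding Z'_def by auto
  have ws: "(\<Sum>i\<le>n. w i) = 1"
  proof -
    have "(\<Sum>i\<le>n. w i) = (\<Sum>i\<le>n. q i * exp (- \<theta> * ch i) / Z)" using w unfolding Z_def by simp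
    also have "\<dots> = 1" using Zp unfolding sum_divide_distrib[symmetric] Z_def by simp
    finally show ?thesis .
  qed
  have q's: "(\<Sum>i\<le>n. q' i) = 1"
  proof -
    have "(\<Sum>i\<le>n. q' i) = (\<Sum>i\<le>n. q i * exp (- \<theta> * c i) / Z')" using q' unfolding Z'_def by simp
    also have "\<dots> = 1" using Z'p unfolding sum_divide_distrib[symmetric] Z'_def by simp
    finally show ?thesis .
  qed
  have lw: "ln (w i) = ln (q i) - \<theta> * ch i - ln Z" if "i \<le> n" for i
  proof -
    have "w i = q i * exp (- \<theta> * ch i) / Z" using w that unfolding Z_def by simp
    moreover have "q i > 0" using q that by simp
    ultimately show ?thesis using Zp by (simp add: ln_div ln_mult)
  qed
  have lq': "ln (q' i) = ln (q i) - \<theta> * c i - ln Z'" if "i \<le> n" for i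
  proof -
    have "q' i = q i * exp (- \<theta> * c i) / Z'" using q' that unfolding Z'_def by simp
    moreover have "q i > 0" using q that by simp
    ultimately show ?thesis using Z'p by (simp add: ln_div ln_mult)
  qed
  have ea: "u i * ln (u i / q i) - u i * ln (u i / q' i) = - \<theta> * (c i * u i) - u i * ln Z'"
    if "i \<le> n" for i
  proof (cases "u i = 0")
    case False
    moreover have "u i \<ge> 0" using u that by simp
    ultimately have "u i > 0" by simp
    hence "u i * ln (u i / q i) - u i * ln (u i / q' i) = u i * (ln (q' i) - ln (q i))"
      using q(1)[rule_format, OF that] q'p[rule_format, OF that] by (simp add: ln_div algebra_simps)
    thus ?thesis using lq'[OF that] by (simp add: algebra_simps)
  qed simp
  have eb: "q' i * ln (q' i / w i) = - \<theta> * (c i * q' i) + \<theta> * (ch i * q' i) - q' i * ln Z' + q' i * ln Z"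
    if "i \<le> n" for i
  proof -
    have "q' i * ln (q' i / w i) = q' i * (ln (q' i) - ln (w i))"
      using q'p[rule_format, OF that] wp[rule_format, OF that] by (simp add: ln_div)
    also have "\<dots> = q' i * ((ln (q i) - \<theta> * c i - ln Z') - (ln (q i) - \<theta> * ch i - ln Z))"
      using lq'[OF that] lw[OF that] by simp
    finally show ?thesis by (simp add: algebra_simps)
  qed
  have ec: "w i * ln (w i / q i) = - \<theta> * (ch i * w i) - w i * ln Z"
    if "i \<le> n" for i
  proof -
    have "w i * ln (w i / q i) = w i * (ln (w i) - ln (q i))"
      using q(1)[rule_format, OF that] wp[rule_format, OF that] by (simp add: ln_div)
    also have "\<dots> = w i * ((ln (q i) - \<theta> * ch i - ln Z) - ln (q i))"
      using lw[OF that] by simp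
    finally show ?thesis by (simp add: algebra_simps)
  qed
  define A where "A = (\<Sum>i\<le>n. c i * u i)"
  define B where "B = (\<Sum>i\<le>n. c i * w i)"
  define Cc where "Cc = (\<Sum>i\<le>n. ch i * w i)"
  define D where "D = (\<Sum>i\<le>n. c i * q' i)"
  define E where "E = (\<Sum>i\<le>n. ch i * q' i)"
  have sa: "KL n u q - KL n u q' = - \<theta> * A - ln Z'"
  proof -
    have "KL n u q - KL n u q' = (\<Sum>i\<le>n. u i * ln (u i / q i) - u i * ln (u i / q' i))"
      unfolding KL_def by (simp add: sum_subtractf)
    also have "\<dots> = (\<Sum>i\<le>n. - \<theta> * (c i * u i) - u i * ln Z')" using ea by simp
    also have "\<dots> = - \<theta> * A - ln Z'" unfolding A_def
      by (simp add: sum_subtractf sum_distrib_left[symmetric] sum_distrib_right[symmetric] sum_negf u)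
    finally show ?thesis .
  qed
  have sb: "KL n q' w = - \<theta> * D + \<theta> * E - ln Z' + ln Z"
  proof -
    have "KL n q' w = (\<Sum>i\<le>n. - \<theta> * (c i * q' i) + \<theta> * (ch i * q' i) - q' i * ln Z' + q' i * ln Z)"
      unfolding KL_def using eb by simp
    also have "\<dots> = - \<theta> * D + \<theta> * E - ln Z' + ln Z" unfolding D_def E_def
      by (simp add: sum.distrib sum_subtractf sum_distrib_left[symmetric] sum_distrib_right[symmetric] sum_negf q's)
    finally show ?thesis .
  qed
  have sc: "KL n w q = - \<theta> * Cc - ln Z"
  proof -
    have "KL n w q = (\<Sum>i\<le>n. - \<theta> * (ch i * w i) - w i * ln Z)"
      unfolding KL_def using ec by simp
    also have "\<dots> = - \<theta> * Cc - ln Z" unfolding Cc_def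
      by (simp add: sum_subtractf sum_distrib_left[symmetric] sum_distrib_right[symmetric] sum_negf ws)
    finally show ?thesis .
  qed
  have sd: "(\<Sum>i\<le>n. (c i - ch i) * (w i - q' i)) = B - Cc - D + E"
    unfolding B_def Cc_def D_def E_def by (simp add: algebra_simps sum.distrib sum_subtractf)
  have se: "(\<Sum>i\<le>n. c i * (w i - u i)) = B - A"
    unfolding B_def A_def by (simp add: algebra_simps sum_subtractf)
  have ident: "\<theta> * (\<Sum>i\<le>n. c i * (w i - u i)) = KL n u q - KL n u q'
      + \<theta> * (\<Sum>i\<le>n. (c i - ch i) * (w i - q' i)) - KL n q' w - KL n w q"
    unfolding sa sb sc sd se by (simp add: algebra_simps)
  define Dl where "Dl = (\<Sum>i\<le>n. \<bar>w i - q' i\<bar>)"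
  have b1: "(\<Sum>i\<le>n. (c i - ch i) * (w i - q' i)) \<le> M * Dl"
  proof -
    have "(\<Sum>i\<le>n. (c i - ch i) * (w i - q' i)) \<le> (\<Sum>i\<le>n. M * \<bar>w i - q' i\<bar>)"
    proof (rule sum_mono)
      fix i assume "i \<in> {..n}"
      hence "\<bar>c i - ch i\<bar> \<le> M" using M by simp
      hence "\<bar>c i - ch i\<bar> * \<bar>w i - q' i\<bar> \<le> M * \<bar>w i - q' i\<bar>" by (rule mult_right_mono) simp
      thus "(c i - ch i) * (w i - q' i) \<le> M * \<bar>w i - q' i\<bar>"
        by (metis abs_ge_self abs_mult order_trans)
    qed
    thus ?thesis unfolding Dl_def by (simp add: sum_distrib_left)
  qed
  have "Dl = (\<Sum>i\<le>n. \<bar>q' i - w i\<bar>)" unfolding Dl_def by (simp add: abs_minus_commute)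
  moreover have "(\<Sum>i\<le>n. \<bar>q' i - w i\<bar>)^2 / 2 \<le> KL n q' w"
    by (rule pinsker) (use q'p q's wp ws in auto)
  ultimately have p1: "Dl^2 / 2 \<le> KL n q' w" by simp
  have p2: "(\<Sum>i\<le>n. \<bar>w i - q i\<bar>)^2 / 2 \<le> KL n w q"
    by (rule pinsker) (use q wp ws in auto)
  have amgm: "\<theta> * (M * Dl) - Dl^2/2 \<le> \<theta>^2 * M^2 / 2"
  proof -
    have "0 \<le> (\<theta> * M - Dl)^2" by simp
    thus ?thesis by (simp add: power2_eq_square algebra_simps)
  qed
  have "\<theta> * (\<Sum>i\<le>n. (c i - ch i) * (w i - q' i)) \<le> \<theta> * (M * Dl)"
    using b1 th by (simp add: mult_left_mono)
  thus ?thesis using ident p1 p2 amgm by linarith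
qed



theorem corollary4:
  fixes C :: "'a::{real_inner, complete_space} set"
    and \<phi> \<phi>h :: "nat \<Rightarrow> 'a \<Rightarrow> ereal"
    and x :: "nat \<Rightarrow> nat \<Rightarrow> 'a"
    and w wt :: "nat \<Rightarrow> nat \<Rightarrow> real"
    and g gh :: "nat \<Rightarrow> 'a"
    and n :: nat and L \<theta> :: real
    and T :: nat and u :: "nat \<Rightarrow> real"
  assumes C_ne: "C \<noteq> {}" and C_closed: "closed C" and C_convex: "convex C"
    and C_bdd: "bounded C"
    and C_norm: "\<forall>y\<in>C. norm y \<le> diameter C"
    and L_pos: "L > 0" and theta_pos: "\<theta> > 0"
    and phi_convex: "\<forall>t\<ge>1. convex_fun (\<phi> t)"
    and phi_dom: "\<forall>t\<ge>1. \<forall>y\<in>C. subdiff (\<phi> t) y \<noteq> {}"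
    and phih_convex: "\<forall>t\<ge>1. convex_fun (\<phi>h t)"
    and phih_dom: "\<forall>t\<ge>1. \<forall>y\<in>C. subdiff (\<phi>h t) y \<noteq> {}"
    and phih_lip: "\<forall>t\<ge>1. \<forall>y\<in>C. \<forall>z\<in>C. \<forall>a\<in>subdiff (\<phi>h t) y. \<forall>b\<in>subdiff (\<phi>h t) z.
                      norm (a - b) \<le> L * norm (y - z)"
    and x_in: "\<forall>t\<ge>1. \<forall>i\<le>n. x t i \<in> C"
    and wt1: "wt 1 \<in> prob_simplex n" and wt1_pos: "\<forall>i\<le>n. wt 1 i > 0"
    and g_sub: "\<forall>t\<ge>1. g t \<in> subdiff (\<phi> t) (\<Sum>i\<le>n. w t i *\<^sub>R x t i)"
    and gh_sub: "\<forall>t\<ge>1. gh t \<in> subdiff (\<phi>h t) (\<Sum>i\<le>n. wt t i *\<^sub>R x t i)"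
    and ones_tilde: "\<forall>t\<ge>1. \<forall>i\<le>n. wt (Suc t) i =
        wt t i * exp (- \<theta> * inner (g t) (x t i)) /
        (\<Sum>j\<le>n. wt t j * exp (- \<theta> * inner (g t) (x t j)))"
    and ones_w: "\<forall>t\<ge>1. \<forall>i\<le>n. w t i =
        wt t i * exp (- \<theta> * inner (gh t) (x t i)) /
        (\<Sum>j\<le>n. wt t j * exp (- \<theta> * inner (gh t) (x t j)))"
    and T_ge: "T \<ge> 1"
    and u_simplex: "u \<in> prob_simplex n"
  shows "ereal (\<Sum>t=1..T. \<Sum>i\<le>n. inner (g t) (x t i) * (w t i - u i))
    \<le> ereal ((1 / \<theta>) * (\<Sum>i\<le>n. u i * ln (u i / wt 1 i)))
       + ereal (\<theta> * (diameter C)\<^sup>2) *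
         (\<Sum>t=1..T.
            Sup {ereal ((norm (a - b))\<^sup>2) | y a b.
                   y \<in> C \<and> a \<in> subdiff (\<phi> t) y \<and> b \<in> subdiff (\<phi>h t) y}
            + ereal ((if \<theta> > 1 / (sqrt 2 * (diameter C)\<^sup>2 * L) then 1 else 0)
                     * (diameter C)\<^sup>2 * L\<^sup>2 * (\<Sum>i\<le>n. \<bar>w t i - wt t i\<bar>)\<^sup>2))"
proof -
  define \<rho> where "\<rho> = diameter C"
  have rho0: "\<rho> \<ge> 0" unfolding \<rho>_def by (rule diameter_ge_0[OF C_bdd])
  have xn: "norm (x t i) \<le> \<rho>" if "t \<ge> 1" "i \<le> n" for t i
    using x_in that C_norm unfolding \<rho>_def by blast
  have wtP: "(\<forall>i\<le>n. 0 < wt (Suc k) i) \<and> (\<Sum>i\<le>n. wt (Suc k) i) = 1" for k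
  proof (induction k)
    case 0
    then show ?case using wt1 wt1_pos unfolding prob_simplex_def by simp
  next
    case (Suc k)
    define Z where "Z = (\<Sum>j\<le>n. wt (Suc k) j * exp (- \<theta> * inner (g (Suc k)) (x (Suc k) j)))"
    have Zp: "Z > 0" unfolding Z_def using Suc by (intro sum_pos) auto
    have eq: "\<forall>i\<le>n. wt (Suc (Suc k)) i = wt (Suc k) i * exp (- \<theta> * inner (g (Suc k)) (x (Suc k) i)) / Z"
      using ones_tilde unfolding Z_def by auto
    have "(\<Sum>i\<le>n. wt (Suc (Suc k)) i) = (\<Sum>i\<le>n. wt (Suc k) i * exp (- \<theta> * inner (g (Suc k)) (x (Suc k) i)) / Z)"
      using eq by simp
    also have "\<dots> = 1" using Zp unfolding sum_divide_distrib[symmetric] Z_def by simp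
    finally show ?case using eq Zp Suc by auto
  qed
  have wtP': "(\<forall>i\<le>n. 0 < wt t i) \<and> (\<Sum>i\<le>n. wt t i) = 1" if "t \<ge> 1" for t
    using wtP[of "t - 1"] that by simp
  have wP: "(\<forall>i\<le>n. 0 < w t i) \<and> (\<Sum>i\<le>n. w t i) = 1" if "t \<ge> 1" for t
  proof -
    define Z where "Z = (\<Sum>j\<le>n. wt t j * exp (- \<theta> * inner (gh t) (x t j)))"
    have Zp: "Z > 0" unfolding Z_def using wtP'[OF that] by (intro sum_pos) auto
    have eq: "\<forall>i\<le>n. w t i = wt t i * exp (- \<theta> * inner (gh t) (x t i)) / Z"
      using ones_w that unfolding Z_def by auto
    have "(\<Sum>i\<le>n. w t i) = (\<Sum>i\<le>n. wt t i * exp (- \<theta> * inner (gh t) (x t i)) / Z)"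
      using eq by simp
    also have "\<dots> = 1" using Zp unfolding sum_divide_distrib[symmetric] Z_def by simp
    finally show ?thesis using eq Zp wtP'[OF that] by auto
  qed
  define xb where "xb t = (\<Sum>i\<le>n. w t i *\<^sub>R x t i)" for t
  define xtb where "xtb t = (\<Sum>i\<le>n. wt t i *\<^sub>R x t i)" for t
  have xbC: "xb t \<in> C" if "t \<ge> 1" for t
    unfolding xb_def by (rule convex_sum) (use wP[OF that] x_in that C_convex in \<open>auto simp: less_imp_le\<close>)
  have xtbC: "xtb t \<in> C" if "t \<ge> 1" for t
    unfolding xtb_def by (rule convex_sum) (use wtP'[OF that] x_in that C_convex in \<open>auto simp: less_imp_le\<close>)
  define hh where "hh t = (SOME b. b \<in> subdiff (\<phi>h t) (xb t))" for t
  have hh: "hh t \<in> subdiff (\<phi>h t) (xb t)" if "t \<ge> 1" for t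
    unfolding hh_def using phih_dom xbC[OF that] that by (metis ex_in_conv someI_ex)
  define a where "a t = norm (g t - hh t)" for t
  define \<Delta> where "\<Delta> t = (\<Sum>i\<le>n. \<bar>w t i - wt t i\<bar>)" for t
  define M where "M t = \<rho> * (a t + L * \<rho> * \<Delta> t)" for t
  define ind where "ind = (if \<theta> > 1 / (sqrt 2 * \<rho>\<^sup>2 * L) then 1 else (0::real))"
  define KLu where "KLu t = KL n u (wt t)" for t
  have Mb: "\<bar>inner (g t) (x t i) - inner (gh t) (x t i)\<bar> \<le> M t" if "t \<ge> 1" "i \<le> n" for t i
  proof -
    have "norm (xb t - xtb t) = norm (\<Sum>i\<le>n. (w t i - wt t i) *\<^sub>R x t i)"
      unfolding xb_def xtb_def by (simp add: sum_subtractf scaleR_diff_left)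
    also have "\<dots> \<le> (\<Sum>i\<le>n. norm ((w t i - wt t i) *\<^sub>R x t i))" by (rule norm_sum)
    also have "\<dots> \<le> (\<Sum>i\<le>n. \<bar>w t i - wt t i\<bar> * \<rho>)"
      by (rule sum_mono) (use xn that in \<open>auto intro: mult_left_mono\<close>)
    finally have nx: "norm (xb t - xtb t) \<le> \<rho> * \<Delta> t" unfolding \<Delta>_def
      by (simp add: sum_distrib_left mult.commute)
    have "norm (hh t - gh t) \<le> L * norm (xb t - xtb t)"
      using phih_lip that xbC xtbC hh gh_sub unfolding xtb_def by blast
    also have "\<dots> \<le> L * (\<rho> * \<Delta> t)" using nx L_pos by simp
    finally have nh: "norm (hh t - gh t) \<le> L * \<rho> * \<Delta> t" by simp
    have "norm (g t - gh t) \<le> norm (g t - hh t) + norm (hh t - gh t)"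
      by (metis diff_add_cancel norm_triangle_ineq add_diff_eq)
    hence ng: "norm (g t - gh t) \<le> a t + L * \<rho> * \<Delta> t" using nh unfolding a_def by simp
    have "\<bar>inner (g t) (x t i) - inner (gh t) (x t i)\<bar> = \<bar>inner (g t - gh t) (x t i)\<bar>"
      by (simp add: inner_diff_left)
    also have "\<dots> \<le> norm (g t - gh t) * norm (x t i)" by (rule Cauchy_Schwarz_ineq2)
    also have "\<dots> \<le> (a t + L * \<rho> * \<Delta> t) * \<rho>"
      by (rule mult_mono) (use ng xn[OF that] norm_ge_zero[of "g t - gh t"] norm_ge_zero[of "x t i"] in linarith)+
    finally show ?thesis unfolding M_def by (simp add: mult.commute)
  qed
  have round: "\<theta> * (\<Sum>i\<le>n. inner (g t) (x t i) * (w t i - u i))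
     \<le> KLu t - KLu (Suc t) + \<theta>^2 * (M t)^2 / 2 - (\<Delta> t)^2 / 2" if "t \<ge> 1" for t
    unfolding KLu_def \<Delta>_def
    by (rule round_bound) (use wtP'[OF that] u_simplex theta_pos Mb that ones_w ones_tilde in
      \<open>auto simp: prob_simplex_def\<close>)
  have per: "\<theta>^2 * (M t)^2 / 2 - (\<Delta> t)^2 / 2
      \<le> \<theta> * (\<theta> * \<rho>\<^sup>2 * ((a t)\<^sup>2 + ind * \<rho>\<^sup>2 * L\<^sup>2 * (\<Delta> t)\<^sup>2))" for t
  proof -
    have "(M t)^2 \<le> 2 * \<rho>\<^sup>2 * ((a t)\<^sup>2 + L\<^sup>2 * \<rho>\<^sup>2 * (\<Delta> t)\<^sup>2)"
    proof -
      have "0 \<le> \<rho>\<^sup>2 * (a t - L * \<rho> * \<Delta> t)^2" by simp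
      thus ?thesis unfolding M_def by (simp add: power2_eq_square algebra_simps)
    qed
    hence "\<theta>^2 * (M t)^2 \<le> \<theta>^2 * (2 * \<rho>\<^sup>2 * ((a t)\<^sup>2 + L\<^sup>2 * \<rho>\<^sup>2 * (\<Delta> t)\<^sup>2))"
      by (rule mult_left_mono) simp
    hence "\<theta>^2 * (M t)^2 / 2 \<le> \<theta>^2 * (\<rho>\<^sup>2 * ((a t)\<^sup>2 + L\<^sup>2 * \<rho>\<^sup>2 * (\<Delta> t)\<^sup>2))"
      by simp
    moreover have "\<theta>^2 * \<rho>\<^sup>2 * L\<^sup>2 * \<rho>\<^sup>2 * (\<Delta> t)\<^sup>2 - (\<Delta> t)\<^sup>2 / 2
        \<le> \<theta>^2 * \<rho>\<^sup>2 * ind * \<rho>\<^sup>2 * L\<^sup>2 * (\<Delta> t)\<^sup>2"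
    proof (cases "\<theta> > 1 / (sqrt 2 * \<rho>\<^sup>2 * L)")
      case True
      thus ?thesis unfolding ind_def by (simp add: algebra_simps)
    next
      case False
      note nth = False
      hence i0: "ind = 0" unfolding ind_def by simp
      show ?thesis
      proof (cases "\<rho> = 0")
        case True thus ?thesis using i0 by simp
      next
        case False
        have pos: "sqrt 2 * \<rho>\<^sup>2 * L > 0" using False L_pos rho0 by simp
        have "\<theta> * (sqrt 2 * \<rho>\<^sup>2 * L) \<le> 1"
          using nth pos by (simp add: field_simps)
        hence "(\<theta> * (sqrt 2 * \<rho>\<^sup>2 * L))^2 \<le> 1^2"
          using pos theta_pos by (intro power_mono) auto
        hence "2 * (\<theta>^2 * \<rho>\<^sup>2 * L\<^sup>2 * \<rho>\<^sup>2) \<le> 1"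
          by (simp add: power_mult_distrib power2_eq_square algebra_simps)
        hence "2 * (\<theta>^2 * \<rho>\<^sup>2 * L\<^sup>2 * \<rho>\<^sup>2) * (\<Delta> t)\<^sup>2 \<le> 1 * (\<Delta> t)\<^sup>2"
          by (intro mult_right_mono) auto
        thus ?thesis using i0 by simp
      qed
    qed
    ultimately show ?thesis by (simp add: algebra_simps power2_eq_square)
  qed
  have tel: "(\<Sum>t=1..T. KLu t - KLu (Suc t)) = KLu 1 - KLu (Suc T)"
  proof -
    have "(\<Sum>t=1..T. KLu (Suc t) - KLu t) = KLu (Suc T) - KLu 1"
      by (rule sum_Suc_diff) simp
    moreover have "(\<Sum>t=1..T. KLu t - KLu (Suc t)) = - (\<Sum>t=1..T. KLu (Suc t) - KLu t)"
      by (simp add: sum_negf[symmetric])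
    ultimately show ?thesis by simp
  qed
  have KLT: "KLu (Suc T) \<ge> 0" unfolding KLu_def
    by (rule KL_nonneg) (use wtP[of T] u_simplex in \<open>auto simp: prob_simplex_def\<close>)
  define X where "X t = (a t)\<^sup>2 + ind * \<rho>\<^sup>2 * L\<^sup>2 * (\<Delta> t)\<^sup>2" for t
  have "\<theta> * (\<Sum>t=1..T. \<Sum>i\<le>n. inner (g t) (x t i) * (w t i - u i))
     = (\<Sum>t=1..T. \<theta> * (\<Sum>i\<le>n. inner (g t) (x t i) * (w t i - u i)))"
    by (simp add: sum_distrib_left)
  also have "\<dots> \<le> (\<Sum>t=1..T. (KLu t - KLu (Suc t)) + \<theta> * (\<theta> * \<rho>\<^sup>2 * X t))"
  proof (rule sum_mono)
    fix t assume "t \<in> {1..T}"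
    hence "t \<ge> 1" by simp
    from round[OF this] per[of t] show "\<theta> * (\<Sum>i\<le>n. inner (g t) (x t i) * (w t i - u i))
      \<le> (KLu t - KLu (Suc t)) + \<theta> * (\<theta> * \<rho>\<^sup>2 * X t)" unfolding X_def by linarith
  qed
  also have "\<dots> = KLu 1 - KLu (Suc T) + \<theta> * (\<theta> * \<rho>\<^sup>2 * (\<Sum>t=1..T. X t))"
    by (simp only: sum.distrib tel) (simp add: sum_distrib_left)
  also have "\<dots> \<le> KLu 1 + \<theta> * (\<theta> * \<rho>\<^sup>2 * (\<Sum>t=1..T. X t))" using KLT by simp
  finally have main: "(\<Sum>t=1..T. \<Sum>i\<le>n. inner (g t) (x t i) * (w t i - u i))
      \<le> (1/\<theta>) * KLu 1 + \<theta> * \<rho>\<^sup>2 * (\<Sum>t=1..T. X t)"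
    using theta_pos by (simp add: field_simps)
  have supb: "ereal ((a t)\<^sup>2) \<le> Sup {ereal ((norm (a' - b))\<^sup>2) | y a' b.
                   y \<in> C \<and> a' \<in> subdiff (\<phi> t) y \<and> b \<in> subdiff (\<phi>h t) y}" if "t \<ge> 1" for t
    unfolding a_def
    by (rule Sup_upper) (use xbC[OF that] g_sub hh[OF that] that in \<open>auto simp: xb_def\<close>)
  have "ereal (\<Sum>t=1..T. \<Sum>i\<le>n. inner (g t) (x t i) * (w t i - u i))
      \<le> ereal ((1/\<theta>) * KLu 1) + ereal (\<theta> * \<rho>\<^sup>2) * (\<Sum>t=1..T. ereal (X t))"
  proof -
    have "ereal (\<theta> * \<rho>\<^sup>2) * (\<Sum>t=1..T. ereal (X t)) = ereal (\<theta> * \<rho>\<^sup>2 * (\<Sum>t=1..T. X t))"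
      by simp
    hence "ereal ((1/\<theta>) * KLu 1) + ereal (\<theta> * \<rho>\<^sup>2) * (\<Sum>t=1..T. ereal (X t))
       = ereal ((1/\<theta>) * KLu 1 + \<theta> * \<rho>\<^sup>2 * (\<Sum>t=1..T. X t))" by simp
    thus ?thesis using main by (simp only: ereal_less_eq)
  qed
  also have "\<dots> \<le> ereal ((1/\<theta>) * KLu 1) + ereal (\<theta> * \<rho>\<^sup>2) *
         (\<Sum>t=1..T.
            Sup {ereal ((norm (a - b))\<^sup>2) | y a b.
                   y \<in> C \<and> a \<in> subdiff (\<phi> t) y \<and> b \<in> subdiff (\<phi>h t) y}
            + ereal (ind * \<rho>\<^sup>2 * L\<^sup>2 * (\<Delta> t)\<^sup>2))"
  proof -
    have "(\<Sum>t=1..T. ereal (X t)) \<le> (\<Sum>t=1..T.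
            Sup {ereal ((norm (a - b))\<^sup>2) | y a b.
                   y \<in> C \<and> a \<in> subdiff (\<phi> t) y \<and> b \<in> subdiff (\<phi>h t) y}
            + ereal (ind * \<rho>\<^sup>2 * L\<^sup>2 * (\<Delta> t)\<^sup>2))"
    proof (rule sum_mono)
      fix t assume "t \<in> {1..T}"
      hence "t \<ge> 1" by simp
      have "ereal (X t) = ereal ((a t)\<^sup>2) + ereal (ind * \<rho>\<^sup>2 * L\<^sup>2 * (\<Delta> t)\<^sup>2)" unfolding X_def by simp
      thus "ereal (X t) \<le> Sup {ereal ((norm (a - b))\<^sup>2) | y a b.
                   y \<in> C \<and> a \<in> subdiff (\<phi> t) y \<and> b \<in> subdiff (\<phi>h t) y}
            + ereal (ind * \<rho>\<^sup>2 * L\<^sup>2 * (\<Delta> t)\<^sup>2)"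
        using add_right_mono[OF supb[OF \<open>t\<ge>1\<close>], of "ereal (ind * \<rho>\<^sup>2 * L\<^sup>2 * (\<Delta> t)\<^sup>2)"]
        by (simp only: plus_ereal.simps)
    qed
    moreover have "0 \<le> ereal (\<theta> * \<rho>\<^sup>2)" using theta_pos by simp
    ultimately show ?thesis by (intro add_left_mono ereal_mult_left_mono)
  qed
  finally show ?thesis unfolding KLu_def KL_def ind_def \<Delta>_def \<rho>_def by simp
qed

end
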